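(* Let $V$ be a smooth manifold carrying two structures of a finite-dimensional real vector space (compatible with its smooth structure), with scalar multiplications $h^1_t$ and $h^2_t$, $t\ge 0$. If the homotheties commute, $h^1_t\circ h^2_s=h^2_s\circ h^1_t$ for all $s,t\ge 0$, then the two vector space structures coincide. *)

theory Defs
  imports "HOL-Analysis.Analysis"
begin

text \<open>C-infinity maps between finite-dimensional real normed spaces: f is
  (Frechet) differentiable everywhere and every directional derivative
  x \<mapsto> Df(x)v is again smooth (greatest fixed point = all iterated
  derivatives exist).\<close>
coinductive smooth_map :: "('a::real_normed_vector \<Rightarrow> 'b::real_normed_vector) \<Rightarrow> bool" where
  "(\<forall>x. f differentiable (at x)) \<Longrightarrow>
   (\<forall>v. smooth_map (\<lambda>x. frechet_derivative f (at x) v)) \<Longrightarrow> smooth_map f"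

text \<open>A second vector space structure on V = 'a, transported from 'b along a
  bijection phi (phi is then a linear isomorphism for this structure).\<close>
definition vs2_add :: "('a \<Rightarrow> 'b::real_vector) \<Rightarrow> 'a \<Rightarrow> 'a \<Rightarrow> 'a" where
  "vs2_add \<phi> x y = inv \<phi> (\<phi> x + \<phi> y)"

definition vs2_scale :: "('a \<Rightarrow> 'b::real_vector) \<Rightarrow> real \<Rightarrow> 'a \<Rightarrow> 'a" where
  "vs2_scale \<phi> t x = inv \<phi> (t *\<^sub>R \<phi> x)"

end

theory Submission
  imports Defs
begin

lemma ray_vd:
  fixes g :: "'a::real_normed_vector \<Rightarrow> 'b::real_normed_vector"
  assumes "(g has_derivative D) (at 0)"
  shows "((\<lambda>s::real. g (s *\<^sub>R y)) has_vector_derivative D y) (at 0 within S)"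
proof -
  have l: "linear D" using assms has_derivative_linear by blast
  have d1: "((\<lambda>s::real. s *\<^sub>R y) has_derivative (\<lambda>s. s *\<^sub>R y)) (at 0 within S)"
    by (intro derivative_eq_intros) auto
  have d2: "(g has_derivative D) (at ((0::real) *\<^sub>R y) within ((\<lambda>s. s *\<^sub>R y) ` S))"
    using assms has_derivative_at_withinI by simp
  have "((\<lambda>s::real. g (s *\<^sub>R y)) has_derivative (\<lambda>s. D (s *\<^sub>R y))) (at 0 within S)"
    using has_derivative_in_compose[OF d1 d2] by (simp add: o_def)
  moreover have "(\<lambda>s. D (s *\<^sub>R y)) = (\<lambda>s. s *\<^sub>R D y)"
    using l by (simp add: linear_scale)
  ultimately show ?thesis by (simp add: has_vector_derivative_def)
qed

lemma ray_unique:
  fixes g :: "'a::real_normed_vector \<Rightarrow> 'b::real_normed_vector"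
  assumes "(g has_derivative D) (at 0)"
    and "(h has_vector_derivative c) (at 0 within cbox 0 1)"
    and "\<And>s. 0 \<le> s \<Longrightarrow> g (s *\<^sub>R y) = h s"
  shows "D y = c"
proof -
  have "((\<lambda>s::real. g (s *\<^sub>R y)) has_vector_derivative D y) (at 0 within cbox 0 1)"
    by (rule ray_vd[OF assms(1)])
  moreover have "((\<lambda>s::real. g (s *\<^sub>R y)) has_vector_derivative c) (at 0 within cbox 0 1)"
    by (rule has_vector_derivative_transform[OF _ _ assms(2)]) (auto simp: assms(3))
  ultimately show ?thesis
    by (intro vector_derivative_unique_within_closed_interval[of 0 1 0]) auto
qed

lemma smooth_diff: "smooth_map f \<Longrightarrow> f differentiable (at x)"
  by (erule smooth_map.cases) auto

theorem proposition2:
  fixes \<phi> :: "'a::euclidean_space \<Rightarrow> 'b::euclidean_space"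
  assumes "bij \<phi>"
    and "smooth_map \<phi>"
    and "smooth_map (inv \<phi>)"
    and "\<And>s t x. s \<ge> 0 \<Longrightarrow> t \<ge> 0 \<Longrightarrow>
           t *\<^sub>R vs2_scale \<phi> s x = vs2_scale \<phi> s (t *\<^sub>R x)"
  shows "(\<forall>x y. vs2_add \<phi> x y = x + y) \<and> (\<forall>t x. vs2_scale \<phi> t x = t *\<^sub>R x)"
proof -
  define \<psi> where "\<psi> = inv \<phi>"
  have pp: "\<phi> (\<psi> z) = z" for z using assms(1) unfolding \<psi>_def by (meson bij_inv_eq_iff)
  have ppi: "\<psi> (\<phi> z) = z" for z using assms(1) unfolding \<psi>_def by (simp add: bij_is_inj)
  have comm: "t *\<^sub>R \<psi> (s *\<^sub>R \<phi> x) = \<psi> (s *\<^sub>R \<phi> (t *\<^sub>R x))" if "s \<ge> 0" "t \<ge> 0" for s t x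
    using assms(4)[OF that] unfolding vs2_scale_def \<psi>_def by simp
  have psi0: "\<psi> 0 = 0" using comm[of 0 0 0] by simp
  have phi0: "\<phi> 0 = 0" using pp[of 0] psi0 by simp
  define L where "L = frechet_derivative \<psi> (at 0)"
  define M where "M = frechet_derivative \<phi> (at 0)"
  have dL: "(\<psi> has_derivative L) (at 0)"
    using smooth_diff[OF assms(3)] unfolding L_def \<psi>_def using frechet_derivative_works by blast
  have dM': "(\<phi> has_derivative M) (at (\<psi> 0))"
    using smooth_diff[OF assms(2)] unfolding M_def psi0 using frechet_derivative_works by blast
  have dM: "(\<phi> has_derivative M) (at 0)" using dM' psi0 by simp
  have "((\<phi> \<circ> \<psi>) has_derivative (M \<circ> L)) (at 0)"
    by (rule diff_chain_at[OF dL dM'])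
  moreover have "(\<phi> \<circ> \<psi>) = id" using pp by auto
  ultimately have "((\<lambda>x. x) has_derivative (M \<circ> L)) (at 0)" by (simp add: id_def)
  hence MLid: "M \<circ> L = (\<lambda>x. x)" using has_derivative_unique has_derivative_ident by blast
  have Linj: "L a = L b \<Longrightarrow> a = b" for a b
    using MLid by (metis comp_apply)
  have linL: "linear L" using dL has_derivative_linear by blast
  have hom: "\<phi> (t *\<^sub>R x) = t *\<^sub>R \<phi> x" if "t \<ge> 0" for t x
  proof -
    have "((\<lambda>s::real. \<psi> (s *\<^sub>R \<phi> x)) has_vector_derivative L (\<phi> x)) (at 0 within cbox 0 1)"
      by (rule ray_vd[OF dL])
    hence "((\<lambda>s::real. t *\<^sub>R \<psi> (s *\<^sub>R \<phi> x)) has_vector_derivative t *\<^sub>R L (\<phi> x)) (at 0 within cbox 0 1)"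
      by (rule bounded_linear.has_vector_derivative[OF bounded_linear_scaleR_right])
    hence "L (\<phi> (t *\<^sub>R x)) = t *\<^sub>R L (\<phi> x)"
      by (rule ray_unique[OF dL]) (simp add: comm that)
    hence "L (\<phi> (t *\<^sub>R x)) = L (t *\<^sub>R \<phi> x)" using linL by (simp add: linear_scale)
    thus ?thesis using Linj by blast
  qed
  have phiM: "\<phi> x = M x" for x
  proof -
    have "((\<lambda>s::real. s *\<^sub>R \<phi> x) has_vector_derivative \<phi> x) (at 0 within cbox 0 1)"
      by (intro derivative_eq_intros) auto
    hence "M x = \<phi> x" by (rule ray_unique[OF dM]) (simp add: hom)
    thus ?thesis by simp
  qed
  have linM: "linear M" using dM has_derivative_linear by blast
  have add: "\<phi> (x + y) = \<phi> x + \<phi> y" for x y using linM phiM by (simp add: linear_add)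
  have sc: "\<phi> (t *\<^sub>R x) = t *\<^sub>R \<phi> x" for t x using linM phiM by (simp add: linear_scale)
  show ?thesis
    unfolding vs2_add_def vs2_scale_def \<psi>_def[symmetric]
    by (simp add: add[symmetric] sc[symmetric] ppi)
qed

end
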